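(* In the setting $|H|=1$ of the context (with Assumption 1), the convex relaxation (R1) is exact (its optimal value equals $c^\star$) if the convex problem $\min\ \sum_{j\in N}x_j^2-w_1$ over $(\boldsymbol{\mu},{\bf x},w_1)\in\mathbb{R}^m\times\mathbb{R}^n\times\mathbb{R}$ subject to $d_1^*+\sum_{i\in M}\xi_i\mu_i=0$; $c_1+\sum_{i\in M}a_{i1}\mu_i=0$; $(D_{jj}-d_1^* )x_j+c_j+\sum_{i\in M}a_{ij}\mu_i=0$ for $j\in N\setminus\{1\}$; $\xi_iw_1+2\sum_{j\in N}a_{ij}x_j\le b_i$ for $i\in M$; $\mu_i\ge0$ for $i\in M$, has nonnegative optimal value (with the convention that an infeasible problem has optimal value $+\infty$).
   Context: Let $N=\{1,\dots,n\}$, $M=\{1,\dots,m\}$. Data: reals $D_{jj}$ ($j\in N$), $c_j$, $a_{ij}$, $b_i$, $\xi_i$ ($i\in M$, $j\in N$). The diagonal QCQP (P) is $c^\star=\inf\{\sum_{j}D_{jj}x_j^2+2\sum_jc_jx_j : \xi_i\sum_jx_j^2+2\sum_ja_{ij}x_j\le b_i,\ i\in M\}$, i.e. all constraint Hessians are ${\bf A}^i=\xi_i{\bf I}$. Its Shor relaxation is $v^\star=\inf\{{\bf D}\bullet{\bf X}+2{\bf c}^\top{\bf x} : \xi_i\,\mathrm{trace}({\bf X})+2{\bf a}_i^\top{\bf x}\le b_i\ (i\in M),\ {\bf X}-{\bf x}{\bf x}^\top\succeq{\bf O}\}$ with ${\bf D}=\mathrm{diag}(D_{jj})$. Assumption 1: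 (P) is feasible; some $\bar{\bf y}\ge0$ has $\sum_i\bar y_i\xi_i>0$; the Shor relaxation has a feasible point in the interior of its feasible region. It is assumed that $d_1^*=\min_{j\in N}D_{jj}$ is attained uniquely at $j=1$. The convex relaxation (R1) is: $\min\ d_1^*w_1+\sum_{j\in N}(D_{jj}-d_1^* )x_j^2+2\sum_{j\in N}c_jx_j$ s.t. $\xi_iw_1+2\sum_{j\in N}a_{ij}x_j\le b_i$ ($i\in M$), $\sum_{j\in N}x_j^2\le w_1$; its optimal value equals $v^\star$. *)

theory Defs
  imports Complex_Main "HOL-Library.Extended_Real"
begin

text \<open>Vectors in R^n are functions nat => real, index set N = {1..n};
  symmetric matrices are nat => nat => real restricted to N x N;
  constraint index set M = {1..m}. Optimal values are extended reals
  (Inf of the empty set is +infinity).\<close>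

definition qobj :: "nat \<Rightarrow> (nat \<Rightarrow> real) \<Rightarrow> (nat \<Rightarrow> real) \<Rightarrow> (nat \<Rightarrow> real) \<Rightarrow> real" where
  "qobj n D c x = (\<Sum>j\<in>{1..n}. D j * (x j)^2) + 2 * (\<Sum>j\<in>{1..n}. c j * x j)"

definition P_feasible :: "nat \<Rightarrow> nat \<Rightarrow> (nat \<Rightarrow> nat \<Rightarrow> real) \<Rightarrow> (nat \<Rightarrow> real) \<Rightarrow> (nat \<Rightarrow> real)
    \<Rightarrow> (nat \<Rightarrow> real) \<Rightarrow> bool" where
  "P_feasible n m a b xi x \<longleftrightarrow>
     (\<forall>i\<in>{1..m}. xi i * (\<Sum>j\<in>{1..n}. (x j)^2) + 2 * (\<Sum>j\<in>{1..n}. a i j * x j) \<le> b i)"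

definition c_star :: "nat \<Rightarrow> nat \<Rightarrow> (nat \<Rightarrow> real) \<Rightarrow> (nat \<Rightarrow> real) \<Rightarrow> (nat \<Rightarrow> nat \<Rightarrow> real)
    \<Rightarrow> (nat \<Rightarrow> real) \<Rightarrow> (nat \<Rightarrow> real) \<Rightarrow> ereal" where
  "c_star n m D c a b xi = Inf ((\<lambda>x. ereal (qobj n D c x)) ` {x. P_feasible n m a b xi x})"

definition shor_qf :: "nat \<Rightarrow> (nat \<Rightarrow> nat \<Rightarrow> real) \<Rightarrow> (nat \<Rightarrow> real) \<Rightarrow> (nat \<Rightarrow> real) \<Rightarrow> real" where
  "shor_qf n X x z = (\<Sum>j\<in>{1..n}. \<Sum>k\<in>{1..n}. z j * z k * (X j k - x j * x k))"

definition sym_on :: "nat \<Rightarrow> (nat \<Rightarrow> nat \<Rightarrow> real) \<Rightarrow> bool" where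
  "sym_on n X \<longleftrightarrow> (\<forall>j\<in>{1..n}. \<forall>k\<in>{1..n}. X j k = X k j)"

definition trace_N :: "nat \<Rightarrow> (nat \<Rightarrow> nat \<Rightarrow> real) \<Rightarrow> real" where
  "trace_N n X = (\<Sum>j\<in>{1..n}. X j j)"

definition shor_feasible :: "nat \<Rightarrow> nat \<Rightarrow> (nat \<Rightarrow> nat \<Rightarrow> real) \<Rightarrow> (nat \<Rightarrow> real) \<Rightarrow> (nat \<Rightarrow> real)
    \<Rightarrow> (nat \<Rightarrow> nat \<Rightarrow> real) \<Rightarrow> (nat \<Rightarrow> real) \<Rightarrow> bool" where
  "shor_feasible n m a b xi X x \<longleftrightarrow> sym_on n X \<and>
     (\<forall>i\<in>{1..m}. xi i * trace_N n X + 2 * (\<Sum>j\<in>{1..n}. a i j * x j) \<le> b i) \<and>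
     (\<forall>z. shor_qf n X x z \<ge> 0)"

definition shor_strictly_feasible :: "nat \<Rightarrow> nat \<Rightarrow> (nat \<Rightarrow> nat \<Rightarrow> real) \<Rightarrow> (nat \<Rightarrow> real) \<Rightarrow> (nat \<Rightarrow> real)
    \<Rightarrow> (nat \<Rightarrow> nat \<Rightarrow> real) \<Rightarrow> (nat \<Rightarrow> real) \<Rightarrow> bool" where
  "shor_strictly_feasible n m a b xi X x \<longleftrightarrow> sym_on n X \<and>
     (\<forall>i\<in>{1..m}. xi i * trace_N n X + 2 * (\<Sum>j\<in>{1..n}. a i j * x j) < b i) \<and>
     (\<forall>z. (\<exists>j\<in>{1..n}. z j \<noteq> 0) \<longrightarrow> shor_qf n X x z > 0)"

definition assumption1 :: "nat \<Rightarrow> nat \<Rightarrow> (nat \<Rightarrow> nat \<Rightarrow> real) \<Rightarrow> (nat \<Rightarrow> real) \<Rightarrow> (nat \<Rightarrow> real) \<Rightarrow> bool" where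
  "assumption1 n m a b xi \<longleftrightarrow>
     (\<exists>x. P_feasible n m a b xi x) \<and>
     (\<exists>y. (\<forall>i\<in>{1..m}. y i \<ge> 0) \<and> (\<Sum>i\<in>{1..m}. y i * xi i) > 0) \<and>
     (\<exists>X x. shor_strictly_feasible n m a b xi X x)"

text \<open>Relaxation (R1), with d1 = d_1^* = D 1.\<close>
definition R1_obj :: "nat \<Rightarrow> (nat \<Rightarrow> real) \<Rightarrow> (nat \<Rightarrow> real) \<Rightarrow> (nat \<Rightarrow> real) \<Rightarrow> real \<Rightarrow> real" where
  "R1_obj n D c x w1 = D 1 * w1 + (\<Sum>j\<in>{1..n}. (D j - D 1) * (x j)^2) + 2 * (\<Sum>j\<in>{1..n}. c j * x j)"

definition R1_feasible :: "nat \<Rightarrow> nat \<Rightarrow> (nat \<Rightarrow> nat \<Rightarrow> real) \<Rightarrow> (nat \<Rightarrow> real) \<Rightarrow> (nat \<Rightarrow> real)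
    \<Rightarrow> (nat \<Rightarrow> real) \<Rightarrow> real \<Rightarrow> bool" where
  "R1_feasible n m a b xi x w1 \<longleftrightarrow>
     (\<forall>i\<in>{1..m}. xi i * w1 + 2 * (\<Sum>j\<in>{1..n}. a i j * x j) \<le> b i) \<and>
     (\<Sum>j\<in>{1..n}. (x j)^2) \<le> w1"

definition R1_value :: "nat \<Rightarrow> nat \<Rightarrow> (nat \<Rightarrow> real) \<Rightarrow> (nat \<Rightarrow> real) \<Rightarrow> (nat \<Rightarrow> nat \<Rightarrow> real)
    \<Rightarrow> (nat \<Rightarrow> real) \<Rightarrow> (nat \<Rightarrow> real) \<Rightarrow> ereal" where
  "R1_value n m D c a b xi =
     Inf ((\<lambda>(x, w1). ereal (R1_obj n D c x w1)) ` {(x, w1). R1_feasible n m a b xi x w1})"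

definition aux_feasible :: "nat \<Rightarrow> nat \<Rightarrow> (nat \<Rightarrow> real) \<Rightarrow> (nat \<Rightarrow> real) \<Rightarrow> (nat \<Rightarrow> nat \<Rightarrow> real)
    \<Rightarrow> (nat \<Rightarrow> real) \<Rightarrow> (nat \<Rightarrow> real) \<Rightarrow> (nat \<Rightarrow> real) \<Rightarrow> (nat \<Rightarrow> real) \<Rightarrow> real \<Rightarrow> bool" where
  "aux_feasible n m D c a b xi mu x w1 \<longleftrightarrow>
     D 1 + (\<Sum>i\<in>{1..m}. xi i * mu i) = 0 \<and>
     c 1 + (\<Sum>i\<in>{1..m}. a i 1 * mu i) = 0 \<and>
     (\<forall>j\<in>{1..n} - {1}. (D j - D 1) * x j + c j + (\<Sum>i\<in>{1..m}. a i j * mu i) = 0) \<and>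
     (\<forall>i\<in>{1..m}. xi i * w1 + 2 * (\<Sum>j\<in>{1..n}. a i j * x j) \<le> b i) \<and>
     (\<forall>i\<in>{1..m}. mu i \<ge> 0)"

definition aux_value :: "nat \<Rightarrow> nat \<Rightarrow> (nat \<Rightarrow> real) \<Rightarrow> (nat \<Rightarrow> real) \<Rightarrow> (nat \<Rightarrow> nat \<Rightarrow> real)
    \<Rightarrow> (nat \<Rightarrow> real) \<Rightarrow> (nat \<Rightarrow> real) \<Rightarrow> ereal" where
  "aux_value n m D c a b xi =
     Inf ((\<lambda>(mu, x, w1). ereal ((\<Sum>j\<in>{1..n}. (x j)^2) - w1)) `
          {(mu, x, w1). aux_feasible n m D c a b xi mu x w1})"

end

theory Submission
  imports Defs "HOL-Analysis.Analysis"
begin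


definition dotp :: "'b set \<Rightarrow> ('b \<Rightarrow> real) \<Rightarrow> ('b \<Rightarrow> real) \<Rightarrow> real" where
  "dotp S x y = (\<Sum>j\<in>S. x j * y j)"

lemma dotp_diff_left: "dotp S (\<lambda>j. x j - c * y j) z = dotp S x z - c * dotp S y z"
  by (simp add: dotp_def sum_subtractf sum_distrib_left algebra_simps)

lemma dotp_diff_right: "dotp S z (\<lambda>j. x j - c * y j) = dotp S z x - c * dotp S z y"
  by (simp add: dotp_def sum_subtractf sum_distrib_left algebra_simps)

lemma dotp_comm: "dotp S x y = dotp S y x"
  by (simp add: dotp_def mult.commute)

lemma farkas:
  fixes S :: "'b set" and I :: "'a set"
  assumes "finite I" "finite S"
  shows "(\<exists>\<mu>. (\<forall>i\<in>I. 0 \<le> \<mu> i) \<and> (\<forall>j\<in>S. v j = (\<Sum>i\<in>I. \<mu> i * g i j)))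
       \<or> (\<exists>d. (\<forall>i\<in>I. dotp S (g i) d \<le> 0) \<and> dotp S v d > 0)"
  using assms(1)
proof (induction I arbitrary: v g rule: finite_induct)
  case empty
  show ?case
  proof (cases "\<forall>j\<in>S. v j = 0")
    case True then show ?thesis by auto
  next
    case False
    then obtain j0 where j0: "j0 \<in> S" "v j0 \<noteq> 0" by auto
    have "0 < v j0 * v j0" using j0 by (auto simp add: zero_less_mult_iff linorder_neq_iff)
    also have "\<dots> \<le> dotp S v v" unfolding dotp_def
      by (rule member_le_sum) (use j0 assms(2) in auto)
    finally show ?thesis by auto
  qed
next
  case (insert k F)
  from insert.IH[of v g] show ?case
  proof
    assume "\<exists>\<mu>. (\<forall>i\<in>F. 0 \<le> \<mu> i) \<and> (\<forall>j\<in>S. v j = (\<Sum>i\<in>F. \<mu> i * g i j))"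
    then obtain \<mu> where mu: "\<forall>i\<in>F. 0 \<le> \<mu> i" "\<forall>j\<in>S. v j = (\<Sum>i\<in>F. \<mu> i * g i j)" by blast
    have "\<forall>j\<in>S. v j = (\<Sum>i\<in>insert k F. (\<mu>(k:=0)) i * g i j)"
    proof
      fix j assume "j \<in> S"
      have "(\<Sum>i\<in>F. (\<mu>(k:=0)) i * g i j) = (\<Sum>i\<in>F. \<mu> i * g i j)"
        by (rule sum.cong) (use insert.hyps in auto)
      then show "v j = (\<Sum>i\<in>insert k F. (\<mu>(k:=0)) i * g i j)"
        using insert.hyps mu \<open>j\<in>S\<close> by simp
    qed
    moreover have "\<forall>i\<in>insert k F. 0 \<le> (\<mu>(k:=0)) i" using mu by auto
    ultimately show ?thesis by blast
  next
    assume "\<exists>d. (\<forall>i\<in>F. dotp S (g i) d \<le> 0) \<and> dotp S v d > 0"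
    then obtain d where d: "\<forall>i\<in>F. dotp S (g i) d \<le> 0" "dotp S v d > 0" by blast
    show ?thesis
    proof (cases "dotp S (g k) d \<le> 0")
      case True then show ?thesis using d by auto
    next
      case False
      define \<gamma> where "\<gamma> = dotp S (g k) d"
      have gpos: "\<gamma> > 0" using False \<gamma>_def by simp
      define h where "h = (\<lambda>i j. g i j - (dotp S (g i) d / \<gamma>) * g k j)"
      define u where "u = (\<lambda>j. v j - (dotp S v d / \<gamma>) * g k j)"
      from insert.IH[of u h] show ?thesis
      proof
        assume "\<exists>la. (\<forall>i\<in>F. 0 \<le> la i) \<and> (\<forall>j\<in>S. u j = (\<Sum>i\<in>F. la i * h i j))"
        then obtain la where la: "\<forall>i\<in>F. 0 \<le> la i" "\<forall>j\<in>S. u j = (\<Sum>i\<in>F. la i * h i j)" by blast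
        define \<mu> where "\<mu> = la(k := (dotp S v d - (\<Sum>i\<in>F. la i * dotp S (g i) d)) / \<gamma>)"
        have "(\<Sum>i\<in>F. la i * dotp S (g i) d) \<le> 0"
          by (rule sum_nonpos) (use la d in \<open>auto intro: mult_nonneg_nonpos\<close>)
        hence "\<mu> k \<ge> 0" using d gpos unfolding \<mu>_def by simp
        moreover have "\<forall>i\<in>F. 0 \<le> \<mu> i" using la insert.hyps unfolding \<mu>_def by auto
        moreover have "\<forall>j\<in>S. v j = (\<Sum>i\<in>insert k F. \<mu> i * g i j)"
        proof
          fix j assume j: "j \<in> S"
          have s1: "(\<Sum>i\<in>F. \<mu> i * g i j) = (\<Sum>i\<in>F. la i * g i j)"
            by (rule sum.cong) (use insert.hyps in \<open>auto simp: \<mu>_def\<close>)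
          have "u j = (\<Sum>i\<in>F. la i * g i j) - (\<Sum>i\<in>F. la i * dotp S (g i) d) / \<gamma> * g k j"
          proof -
            have "(\<Sum>i\<in>F. la i * h i j) = (\<Sum>i\<in>F. la i * g i j - (la i * dotp S (g i) d / \<gamma>) * g k j)"
              by (rule sum.cong) (auto simp: h_def algebra_simps)
            also have "\<dots> = (\<Sum>i\<in>F. la i * g i j) - (\<Sum>i\<in>F. la i * dotp S (g i) d) / \<gamma> * g k j"
              by (simp add: sum_subtractf sum_distrib_right sum_divide_distrib)
            finally show ?thesis using la(2) j by simp
          qed
          then show "v j = (\<Sum>i\<in>insert k F. \<mu> i * g i j)"
            using insert.hyps s1 gpos unfolding u_def \<mu>_def
            by (simp add: field_simps)
        qed
        ultimately show ?thesis by blast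
      next
        assume "\<exists>d'. (\<forall>i\<in>F. dotp S (h i) d' \<le> 0) \<and> dotp S u d' > 0"
        then obtain d' where d': "\<forall>i\<in>F. dotp S (h i) d' \<le> 0" "dotp S u d' > 0" by blast
        define d'' where "d'' = (\<lambda>j. d' j - (dotp S (g k) d' / \<gamma>) * d j)"
        have "dotp S (g k) d'' = 0" unfolding d''_def dotp_diff_right using gpos \<gamma>_def by simp
        moreover have "\<forall>i\<in>F. dotp S (g i) d'' = dotp S (h i) d'"
          unfolding d''_def h_def dotp_diff_right dotp_diff_left by (simp add: dotp_comm)
        moreover have "dotp S v d'' = dotp S u d'"
          unfolding d''_def u_def dotp_diff_right dotp_diff_left by (simp add: dotp_comm)
        ultimately show ?thesis using d' by (intro disjI2 exI[of _ d'']) auto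
      qed
    qed
  qed
qed



lemma cont_coord[continuous_intros]:
  "continuous_on S f \<Longrightarrow> continuous_on S (\<lambda>p. (f p :: nat \<Rightarrow> real) j)"
  by (rule continuous_on_product_then_coordinatewise)

lemma compact_box:
  fixes T :: "nat \<Rightarrow> real set"
  assumes "\<And>j. compact (T j)"
  shows "compact {x::nat\<Rightarrow>real. \<forall>j. x j \<in> T j}"
proof -
  have "compactin (product_topology (\<lambda>_. euclidean) UNIV) (PiE UNIV T)"
    using assms by (simp add: compactin_PiE)
  moreover have "PiE UNIV T = {x::nat\<Rightarrow>real. \<forall>j. x j \<in> T j}" by (auto simp: PiE_def Pi_def)
  ultimately show ?thesis by (simp add: euclidean_product_topology)
qed

lemma closed_R1:
  "closed {(x, w). R1_feasible n m a b xi x w \<and> (\<forall>j. j \<notin> {1..n} \<longrightarrow> x j = 0)}"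
proof -
  have eq: "{(x, w). R1_feasible n m a b xi x w \<and> (\<forall>j. j \<notin> {1..n} \<longrightarrow> x j = 0)} =
     (\<Inter>i\<in>{1..m}. {p. xi i * snd p + 2 * (\<Sum>j\<in>{1..n}. a i j * fst p j) \<le> b i})
     \<inter> {p. (\<Sum>j\<in>{1..n}. (fst p j)^2) \<le> snd p}
     \<inter> (\<Inter>j\<in>-{1..n}. {p. fst p j = 0})"
    by (auto simp: R1_feasible_def)
  show ?thesis unfolding eq
    by (intro closed_Int closed_INT ballI closed_Collect_le closed_Collect_eq continuous_intros)
qed

lemma cont_R1obj: "continuous_on UNIV (\<lambda>p. R1_obj n D c (fst p) (snd p))"
  unfolding R1_obj_def by (intro continuous_intros)



lemma R1_bound:
  assumes y: "\<forall>i\<in>{1..m}. y i \<ge> 0" "(\<Sum>i\<in>{1..m}. y i * xi i) > 0"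
  shows "\<exists>R W. \<forall>x w. R1_feasible n m a b xi x w \<longrightarrow> (\<Sum>j\<in>{1..n}. (x j)^2) \<le> R \<and> w \<le> W"
proof -
  define Y where "Y = (\<Sum>i\<in>{1..m}. y i * xi i)"
  define \<beta> where "\<beta> = (\<Sum>i\<in>{1..m}. y i * b i)"
  define \<alpha> where "\<alpha> = (\<lambda>j. \<Sum>i\<in>{1..m}. y i * a i j)"
  define A where "A = (\<Sum>j\<in>{1..n}. (\<alpha> j)^2)"
  have Y: "Y > 0" using y Y_def by simp
  define K where "K = A / Y"
  define R where "R = 2 * (\<beta> + 2 * K) / Y"
  define W where "W = (\<beta> + 2 * K + Y * R / 2) / Y"
  have main: "(\<Sum>j\<in>{1..n}. (x j)^2) \<le> R \<and> w \<le> W" if f: "R1_feasible n m a b xi x w" for x w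
  proof -
    define Q where "Q = (\<Sum>j\<in>{1..n}. (x j)^2)"
    have Qw: "Q \<le> w" using f unfolding R1_feasible_def Q_def by simp
    have "(\<Sum>i\<in>{1..m}. y i * (xi i * w + 2 * (\<Sum>j\<in>{1..n}. a i j * x j))) \<le> \<beta>"
      unfolding \<beta>_def by (rule sum_mono) (use f y in \<open>auto simp: R1_feasible_def intro: mult_left_mono\<close>)
    moreover have "(\<Sum>i\<in>{1..m}. y i * (xi i * w + 2 * (\<Sum>j\<in>{1..n}. a i j * x j)))
        = Y * w + 2 * (\<Sum>j\<in>{1..n}. \<alpha> j * x j)"
      unfolding Y_def \<alpha>_def
      apply (simp add: distrib_left sum.distrib sum_distrib_left sum_distrib_right algebra_simps)
      by (rule sum.swap)
    ultimately have lin: "Y * w + 2 * (\<Sum>j\<in>{1..n}. \<alpha> j * x j) \<le> \<beta>" by simp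
    have pt: "- 2 * (\<alpha> j * x j) \<le> (2 / Y) * (\<alpha> j)^2 + (Y / 2) * (x j)^2" for j
    proof -
      have "0 \<le> (Y / 2) * (x j + 2 * \<alpha> j / Y)^2" using Y by simp
      also have "\<dots> = (Y / 2) * (x j)^2 + 2 * (\<alpha> j * x j) + (2 / Y) * (\<alpha> j)^2"
        using Y by (simp add: power2_eq_square field_simps)
      finally show ?thesis by simp
    qed
    have "- 2 * (\<Sum>j\<in>{1..n}. \<alpha> j * x j) \<le> (\<Sum>j\<in>{1..n}. (2 / Y) * (\<alpha> j)^2 + (Y / 2) * (x j)^2)"
      using sum_mono[of "{1..n}", OF pt] by (simp add: sum_distrib_left)
    also have "\<dots> = (2 / Y) * A + (Y / 2) * Q"
      unfolding A_def Q_def by (simp add: sum.distrib sum_distrib_left)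
    finally have ineq: "Y * w \<le> \<beta> + (2 / Y) * A + (Y / 2) * Q" using lin by simp
    have "Y * Q \<le> Y * w" using Qw Y by (simp add: mult_left_mono)
    hence YQ: "Y * Q \<le> \<beta> + (2 / Y) * A + (Y / 2) * Q" using ineq by linarith
    have e1: "(2 / Y) * A = 2 * K" unfolding K_def by simp
    have e2: "(Y / 2) * Q = (Y * Q) / 2" by simp
    have YQ': "Y * Q \<le> 2 * (\<beta> + 2 * K)" using YQ unfolding e1 e2 by argo
    have QR: "Q \<le> R" unfolding R_def pos_le_divide_eq[OF Y] using YQ' by (simp add: mult.commute)
    have "Y * R \<ge> Y * Q" using QR Y by (simp add: mult_left_mono)
    hence "Y * w \<le> \<beta> + 2 * K + Y * R / 2" using ineq unfolding e1 e2 by argo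
    hence "w \<le> W" unfolding W_def pos_le_divide_eq[OF Y] by (simp add: mult.commute)
    thus ?thesis using QR Q_def by simp
  qed
  show ?thesis using main by blast
qed



definition zx :: "nat \<Rightarrow> (nat \<Rightarrow> real) \<Rightarrow> nat \<Rightarrow> real" where
  "zx n x = (\<lambda>j. if j \<in> {1..n} then x j else 0)"

lemma sum_zx: "(\<Sum>j\<in>{1..n}. f j (zx n x j)) = (\<Sum>j\<in>{1..n}. f j (x j))"
  by (rule sum.cong) (auto simp: zx_def)

lemma R1_feasible_zx: "R1_feasible n m a b xi (zx n x) w = R1_feasible n m a b xi x w"
proof -
  have "\<And>i. (\<Sum>j\<in>{1..n}. a i j * zx n x j) = (\<Sum>j\<in>{1..n}. a i j * x j)"
    "(\<Sum>j\<in>{1..n}. (zx n x j)^2) = (\<Sum>j\<in>{1..n}. (x j)^2)"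
    by (rule sum_zx)+
  thus ?thesis unfolding R1_feasible_def by simp
qed

lemma R1_obj_zx: "R1_obj n D c (zx n x) w = R1_obj n D c x w"
proof -
  have "(\<Sum>j\<in>{1..n}. (D j - D 1) * (zx n x j)^2) = (\<Sum>j\<in>{1..n}. (D j - D 1) * (x j)^2)"
    "(\<Sum>j\<in>{1..n}. c j * zx n x j) = (\<Sum>j\<in>{1..n}. c j * x j)"
    by (rule sum_zx)+
  thus ?thesis unfolding R1_obj_def by simp
qed

lemma abs_le_sq1: "\<bar>t::real\<bar> \<le> t^2 + 1"
proof -
  have "0 \<le> (\<bar>t\<bar> - 1/2)^2" by simp
  hence "0 \<le> t^2 - \<bar>t\<bar> + 1/4" by (simp add: power2_eq_square algebra_simps)
  thus ?thesis by simp
qed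

lemma R1_min:
  assumes x0: "P_feasible n m a b xi x0"
    and y: "\<forall>i\<in>{1..m}. y i \<ge> 0" "(\<Sum>i\<in>{1..m}. y i * xi i) > 0"
  obtains xs ws where "R1_feasible n m a b xi xs ws" "\<forall>j. j \<notin> {1..n} \<longrightarrow> xs j = 0"
    "\<And>x w. R1_feasible n m a b xi x w \<Longrightarrow> R1_obj n D c xs ws \<le> R1_obj n D c x w"
proof -
  obtain R W where RW: "\<And>x w. R1_feasible n m a b xi x w \<Longrightarrow> (\<Sum>j\<in>{1..n}. (x j)^2) \<le> R \<and> w \<le> W"
    using R1_bound[OF y, of n a b] by blast
  define B where "B = R + 1"
  define T where "T = (\<lambda>j. if j \<in> {1..n} then {-B..B} else {0::real})"
  define C where "C = {(x, w). R1_feasible n m a b xi x w \<and> (\<forall>j. j \<notin> {1..n} \<longrightarrow> x j = 0)}"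
  have sub: "C \<subseteq> {x. \<forall>j. x j \<in> T j} \<times> {0..W}"
  proof
    fix p assume "p \<in> C"
    then obtain x w where pxw: "p = (x, w)" and "(x, w) \<in> C" by (cases p) auto
    hence f: "R1_feasible n m a b xi x w" and z: "\<forall>j. j \<notin> {1..n} \<longrightarrow> x j = 0" by (auto simp: C_def)
    have Q: "(\<Sum>j\<in>{1..n}. (x j)^2) \<le> R" "w \<le> W" using RW[OF f] by auto
    have "0 \<le> (\<Sum>j\<in>{1..n}. (x j)^2)" by (simp add: sum_nonneg)
    hence w0: "0 \<le> w" using f by (auto simp: R1_feasible_def)
    have "x j \<in> T j" for j
    proof (cases "j \<in> {1..n}")
      case True
      have "(x j)^2 \<le> (\<Sum>j\<in>{1..n}. (x j)^2)" by (rule member_le_sum) (use True in auto)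
      hence "\<bar>x j\<bar> \<le> B" using abs_le_sq1[of "x j"] Q unfolding B_def by linarith
      thus ?thesis using True unfolding T_def by (auto simp: abs_le_iff)
    next
      case False thus ?thesis using z unfolding T_def by auto
    qed
    thus "p \<in> {x. \<forall>j. x j \<in> T j} \<times> {0..W}" using w0 Q pxw by auto
  qed
  have "compact ({x. \<forall>j. x j \<in> T j} \<times> {0..W})"
    by (intro compact_Times compact_box) (auto simp: T_def)
  hence "compact (C \<inter> ({x. \<forall>j. x j \<in> T j} \<times> {0..W}))"
    using closed_R1[of n m a b xi] unfolding C_def by (rule closed_Int_compact[rotated])
  moreover have "C \<inter> ({x. \<forall>j. x j \<in> T j} \<times> {0..W}) = C" using sub by blast
  ultimately have cC: "compact C" by simp
  define x0' where "x0' = zx n x0"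
  have "R1_feasible n m a b xi x0 (\<Sum>j\<in>{1..n}. (x0 j)^2)"
    using x0 by (auto simp: R1_feasible_def P_feasible_def)
  hence "R1_feasible n m a b xi x0' (\<Sum>j\<in>{1..n}. (x0 j)^2)" unfolding x0'_def by (simp only: R1_feasible_zx)
  moreover have "\<forall>j. j \<notin> {1..n} \<longrightarrow> x0' j = 0" unfolding x0'_def zx_def by simp
  ultimately have "(x0', \<Sum>j\<in>{1..n}. (x0 j)^2) \<in> C" unfolding C_def by simp
  hence ne: "C \<noteq> {}" by auto
  obtain p where p: "p \<in> C" "\<forall>q\<in>C. R1_obj n D c (fst p) (snd p) \<le> R1_obj n D c (fst q) (snd q)"
    using continuous_attains_inf[OF cC ne continuous_on_subset[OF cont_R1obj subset_UNIV]] by blast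
  show ?thesis
  proof (rule that[of "fst p" "snd p"])
    show "R1_feasible n m a b xi (fst p) (snd p)" "\<forall>j. j \<notin> {1..n} \<longrightarrow> fst p j = 0"
      using p(1) by (auto simp: C_def)
    fix x w assume f: "R1_feasible n m a b xi x w"
    have "R1_feasible n m a b xi (zx n x) w" using f by (simp only: R1_feasible_zx)
    moreover have "\<forall>j. j \<notin> {1..n} \<longrightarrow> zx n x j = 0" unfolding zx_def by simp
    ultimately have "(zx n x, w) \<in> C" unfolding C_def by simp
    from p(2)[rule_format, OF this] show "R1_obj n D c (fst p) (snd p) \<le> R1_obj n D c x w"
      by (simp add: R1_obj_zx)
  qed
qed



lemma dotp_split: fixes n :: nat shows "dotp {0..n} f d = f 0 * d 0 + (\<Sum>j\<in>{1..n}. f j * d j)"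
  unfolding dotp_def using sum.atLeast_Suc_atMost[of 0 n "\<lambda>j. f j * d j"] by simp

lemma idL: "(xi::real) * (ws + t * d0) + 2 * (\<Sum>j\<in>A. a j * (xs j + t * d j))
   = (xi * ws + 2 * (\<Sum>j\<in>A. a j * xs j)) + t * (xi * d0 + 2 * (\<Sum>j\<in>A. a j * d j))"
  by (simp add: algebra_simps sum.distrib sum_distrib_left)

lemma idQ: "(\<Sum>j\<in>A. (xs j + t * d j)^2::real) =
   (\<Sum>j\<in>A. (xs j)^2) + t * (2 * (\<Sum>j\<in>A. xs j * d j)) + t^2 * (\<Sum>j\<in>A. (d j)^2)"
  by (simp add: power2_eq_square algebra_simps sum.distrib sum_distrib_left)

lemma ring_aux: "(D1::real)*(ws + t*d0) + (S1 + t*S2 + t^2*q) + 2*(C + t*Cd) = D1*ws + S1 + 2*C + t*(D1*d0 + (S2 + 2*Cd)) + t^2*q"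
  by (simp add: algebra_simps)

lemma idO: "R1_obj n D c (\<lambda>j. xs j + t * d j) (ws + t * d 0) = R1_obj n D c xs ws
   + t * (D 1 * d 0 + (\<Sum>j\<in>{1..n}. (2 * (D j - D 1) * xs j + 2 * c j) * d j))
   + t^2 * (\<Sum>j\<in>{1..n}. (D j - D 1) * (d j)^2)"
proof -
  have f1: "(\<Sum>j\<in>{1..n}. (D j - D 1) * (xs j + t * d j)^2) = (\<Sum>j\<in>{1..n}. (D j - D 1) * (xs j)^2)
     + t * (\<Sum>j\<in>{1..n}. (2 * (D j - D 1) * xs j) * d j) + t^2 * (\<Sum>j\<in>{1..n}. (D j - D 1) * (d j)^2)"
  proof -
    have pw: "\<And>j. (D j - D 1)*(xs j + t*d j)^2 = (D j - D 1)*(xs j)^2 + t*((2*(D j - D 1)*xs j)*d j) + t^2*((D j - D 1)*(d j)^2)"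
      by (simp add: power2_eq_square algebra_simps)
    show ?thesis by (simp only: pw sum.distrib sum_distrib_left)
  qed
  have f2: "(\<Sum>j\<in>{1..n}. c j * (xs j + t * d j)) = (\<Sum>j\<in>{1..n}. c j * xs j) + t * (\<Sum>j\<in>{1..n}. c j * d j)"
    by (simp add: algebra_simps sum.distrib sum_distrib_left)
  have f3: "(\<Sum>j\<in>{1..n}. (2 * (D j - D 1) * xs j + 2 * c j) * d j) =
     (\<Sum>j\<in>{1..n}. (2 * (D j - D 1) * xs j) * d j) + 2 * (\<Sum>j\<in>{1..n}. c j * d j)"
  proof -
    have pw: "\<And>j. (2 * (D j - D 1) * xs j + 2 * c j) * d j = (2 * (D j - D 1) * xs j) * d j + 2 * (c j * d j)"
      by (simp add: algebra_simps)
    show ?thesis by (simp only: pw sum.distrib sum_distrib_left)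
  qed
  show ?thesis unfolding R1_obj_def f1 f2 f3 by (simp only: ring_aux)
qed

lemma sum_restrict: "B \<subseteq> A \<Longrightarrow> finite A \<Longrightarrow> (\<Sum>i\<in>A. if i \<in> B then f i else 0) = sum f B"
  by (simp add: sum.If_cases Int_absorb1)

lemma slack_impossible:
  assumes n1: "n \<ge> 1"
    and aux: "aux_value n m D c a b xi \<ge> 0"
    and f: "R1_feasible n m a b xi xs ws"
    and opt: "\<And>x w. R1_feasible n m a b xi x w \<Longrightarrow> R1_obj n D c xs ws \<le> R1_obj n D c x w"
  shows "ws \<le> (\<Sum>j\<in>{1..n}. (xs j)^2)"
proof (rule ccontr)
  assume "\<not> ws \<le> (\<Sum>j\<in>{1..n}. (xs j)^2)"
  hence slack: "(\<Sum>j\<in>{1..n}. (xs j)^2) - ws < 0" by simp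
  define L where "L = (\<lambda>i. xi i * ws + 2 * (\<Sum>j\<in>{1..n}. a i j * xs j))"
  have Lb: "\<forall>i\<in>{1..m}. L i \<le> b i" using f unfolding R1_feasible_def L_def by simp
  define Act where "Act = {i\<in>{1..m}. L i = b i}"
  have Act_sub: "Act \<subseteq> {1..m}" and Act_fin: "finite Act" unfolding Act_def by auto
  define g where "g = (\<lambda>i j. if j = 0 then xi i else 2 * a i j)"
  define v where "v = (\<lambda>j. if j = 0 then - D 1 else - (2 * (D j - D 1) * xs j + 2 * c j))"
  have gsplit: "dotp {0..n} (g i) d = xi i * d 0 + 2 * (\<Sum>j\<in>{1..n}. a i j * d j)" for i d
  proof -
    have "(\<Sum>j\<in>{1..n}. g i j * d j) = (\<Sum>j\<in>{1..n}. 2 * (a i j * d j))"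
      by (rule sum.cong) (auto simp: g_def)
    thus ?thesis unfolding dotp_split by (simp add: g_def sum_distrib_left)
  qed
  have vsplit: "dotp {0..n} v d = - (D 1 * d 0 + (\<Sum>j\<in>{1..n}. (2 * (D j - D 1) * xs j + 2 * c j) * d j))" for d
  proof -
    have "(\<Sum>j\<in>{1..n}. v j * d j) = (\<Sum>j\<in>{1..n}. - ((2 * (D j - D 1) * xs j + 2 * c j) * d j))"
      by (rule sum.cong) (auto simp: v_def algebra_simps)
    thus ?thesis unfolding dotp_split by (simp add: v_def sum_negf)
  qed
  from farkas[OF Act_fin, of "{0..n}" v g, OF finite_atLeastAtMost] show False
  proof
    assume "\<exists>\<mu>. (\<forall>i\<in>Act. 0 \<le> \<mu> i) \<and> (\<forall>j\<in>{0..n}. v j = (\<Sum>i\<in>Act. \<mu> i * g i j))"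
    then obtain \<mu> where mu: "\<forall>i\<in>Act. 0 \<le> \<mu> i" "\<forall>j\<in>{0..n}. v j = (\<Sum>i\<in>Act. \<mu> i * g i j)" by blast
    define mu where "mu = (\<lambda>i. if i \<in> Act then \<mu> i else 0)"
    have sr: "(\<Sum>i\<in>{1..m}. h i * mu i) = (\<Sum>i\<in>Act. \<mu> i * h i)" for h
    proof -
      have "(\<Sum>i\<in>{1..m}. h i * mu i) = (\<Sum>i\<in>{1..m}. if i \<in> Act then \<mu> i * h i else 0)"
        by (rule sum.cong) (auto simp: mu_def)
      also have "\<dots> = (\<Sum>i\<in>Act. \<mu> i * h i)" by (rule sum_restrict[OF Act_sub]) simp
      finally show ?thesis .
    qed
    have e0: "D 1 + (\<Sum>i\<in>{1..m}. xi i * mu i) = 0"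
      using mu(2)[rule_format, of 0] unfolding sr by (simp add: v_def g_def)
    have ej: "(D j - D 1) * xs j + c j + (\<Sum>i\<in>{1..m}. a i j * mu i) = 0" if j: "j \<in> {1..n}" for j
    proof -
      have "(\<Sum>i\<in>Act. \<mu> i * g i j) = (\<Sum>i\<in>Act. 2 * (\<mu> i * a i j))"
        by (rule sum.cong) (use j in \<open>auto simp: g_def\<close>)
      hence "- (2 * (D j - D 1) * xs j + 2 * c j) = 2 * (\<Sum>i\<in>Act. \<mu> i * a i j)"
        using mu(2)[rule_format, of j] j by (simp add: v_def sum_distrib_left)
      hence "2 * ((D j - D 1) * xs j + c j + (\<Sum>i\<in>Act. \<mu> i * a i j)) = 0"
        by (simp add: algebra_simps)
      thus ?thesis unfolding sr by simp
    qed
    have "aux_feasible n m D c a b xi mu xs ws"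
      unfolding aux_feasible_def
    proof (intro conjI)
      show "D 1 + (\<Sum>i\<in>{1..m}. xi i * mu i) = 0" by (rule e0)
      show "c 1 + (\<Sum>i\<in>{1..m}. a i 1 * mu i) = 0" using ej[of 1] n1 by simp
      show "\<forall>j\<in>{1..n} - {1}. (D j - D 1) * xs j + c j + (\<Sum>i\<in>{1..m}. a i j * mu i) = 0"
        using ej by auto
      show "\<forall>i\<in>{1..m}. xi i * ws + 2 * (\<Sum>j\<in>{1..n}. a i j * xs j) \<le> b i"
        using f unfolding R1_feasible_def by simp
      show "\<forall>i\<in>{1..m}. 0 \<le> mu i" using mu(1) by (auto simp: mu_def)
    qed
    hence "aux_value n m D c a b xi \<le> ereal ((\<Sum>j\<in>{1..n}. (xs j)^2) - ws)"
      unfolding aux_value_def by (intro Inf_lower) (auto intro!: image_eqI[where x="(mu, xs, ws)"])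
    also have "\<dots> < 0" using slack by simp
    finally show False using aux by simp
  next
    assume "\<exists>d. (\<forall>i\<in>Act. dotp {0..n} (g i) d \<le> 0) \<and> dotp {0..n} v d > 0"
    then obtain d where d: "\<forall>i\<in>Act. dotp {0..n} (g i) d \<le> 0" "dotp {0..n} v d > 0" by blast
    define G where "G = (\<lambda>i. xi i * d 0 + 2 * (\<Sum>j\<in>{1..n}. a i j * d j))"
    define Lg where "Lg = D 1 * d 0 + (\<Sum>j\<in>{1..n}. (2 * (D j - D 1) * xs j + 2 * c j) * d j)"
    define q where "q = (\<Sum>j\<in>{1..n}. (D j - D 1) * (d j)^2)"
    define s0 where "s0 = (\<Sum>j\<in>{1..n}. (xs j)^2) - ws"
    define s1 where "s1 = 2 * (\<Sum>j\<in>{1..n}. xs j * d j) - d 0"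
    define s2 where "s2 = (\<Sum>j\<in>{1..n}. (d j)^2)"
    have GA: "\<forall>i\<in>Act. G i \<le> 0" using d(1) unfolding gsplit G_def by blast
    have Lgneg: "Lg < 0" using d(2) unfolding vsplit Lg_def by simp
    have evpos: "eventually (\<lambda>t::real. t > 0) (at_right 0)" by (rule eventually_at_right_less)
    have ev1: "\<forall>i\<in>{1..m}. eventually (\<lambda>t. L i + t * G i \<le> b i) (at_right 0)"
    proof
      fix i assume i: "i \<in> {1..m}"
      show "eventually (\<lambda>t. L i + t * G i \<le> b i) (at_right 0)"
      proof (cases "i \<in> Act")
        case True
        hence LG: "L i = b i" "G i \<le> 0" using GA by (auto simp: Act_def)
        show ?thesis using evpos
        proof (rule eventually_mono)
          fix t :: real assume "t > 0"
          hence "t * G i \<le> 0" using LG(2) by (simp add: mult_nonneg_nonpos)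
          thus "L i + t * G i \<le> b i" using LG(1) by simp
        qed
      next
        case False
        hence lt: "L i < b i" using Lb i unfolding Act_def by force
        have "((\<lambda>t. L i + t * G i) \<longlongrightarrow> L i + 0 * G i) (at_right 0)"
          by (intro tendsto_intros)
        hence "((\<lambda>t. L i + t * G i) \<longlongrightarrow> L i) (at_right 0)" by simp
        from order_tendstoD(2)[OF this lt] show ?thesis by (elim eventually_mono) simp
      qed
    qed
    hence ev1': "eventually (\<lambda>t. \<forall>i\<in>{1..m}. L i + t * G i \<le> b i) (at_right 0)"
      by (simp add: eventually_ball_finite)
    have "((\<lambda>t. s0 + t * s1 + t^2 * s2) \<longlongrightarrow> s0 + 0 * s1 + 0^2 * s2) (at_right 0)"
      by (intro tendsto_intros)
    hence "((\<lambda>t. s0 + t * s1 + t^2 * s2) \<longlongrightarrow> s0) (at_right 0)" by simp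
    from order_tendstoD(2)[OF this] have ev2: "eventually (\<lambda>t. s0 + t * s1 + t^2 * s2 < 0) (at_right 0)"
      using slack s0_def by simp
    have "((\<lambda>t. Lg + t * q) \<longlongrightarrow> Lg + 0 * q) (at_right 0)" by (intro tendsto_intros)
    hence "((\<lambda>t. Lg + t * q) \<longlongrightarrow> Lg) (at_right 0)" by simp
    from order_tendstoD(2)[OF this Lgneg] have ev3: "eventually (\<lambda>t. Lg + t * q < 0) (at_right 0)" .
    have "eventually (\<lambda>t. t > 0 \<and> (\<forall>i\<in>{1..m}. L i + t * G i \<le> b i) \<and> s0 + t * s1 + t^2 * s2 < 0 \<and> Lg + t * q < 0) (at_right 0)"
      by (intro eventually_conj evpos ev1' ev2 ev3)
    hence "\<exists>t. t > 0 \<and> (\<forall>i\<in>{1..m}. L i + t * G i \<le> b i) \<and> s0 + t * s1 + t^2 * s2 < 0 \<and> Lg + t * q < 0"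
      by (rule eventually_happens'[rotated]) simp
    then obtain t where t: "t > 0" "\<forall>i\<in>{1..m}. L i + t * G i \<le> b i" "s0 + t * s1 + t^2 * s2 < 0" "Lg + t * q < 0"
      by blast
    define xt where "xt = (\<lambda>j. xs j + t * d j)"
    define wt where "wt = ws + t * d 0"
    have "R1_feasible n m a b xi xt wt"
      unfolding R1_feasible_def
    proof (intro conjI ballI)
      fix i assume i: "i \<in> {1..m}"
      show "xi i * wt + 2 * (\<Sum>j\<in>{1..n}. a i j * xt j) \<le> b i"
        using t(2) i unfolding xt_def wt_def idL L_def G_def by simp
    next
      show "(\<Sum>j\<in>{1..n}. (xt j)^2) \<le> wt"
        using t(3) unfolding xt_def wt_def idQ s0_def s1_def s2_def by (simp add: algebra_simps)
    qed
    from opt[OF this] have "R1_obj n D c xs ws \<le> R1_obj n D c xt wt" .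
    moreover have "R1_obj n D c xt wt = R1_obj n D c xs ws + t * (Lg + t * q)"
      unfolding xt_def wt_def idO Lg_def q_def by (simp add: power2_eq_square algebra_simps)
    moreover have "t * (Lg + t * q) < 0" using t(1,4) by (simp add: mult_pos_neg)
    ultimately show False by simp
  qed
qed

theorem proposition4:
  fixes n m :: nat and D c b xi :: "nat \<Rightarrow> real" and a :: "nat \<Rightarrow> nat \<Rightarrow> real"
  assumes "n \<ge> 1"
    and "assumption1 n m a b xi"
    and "\<forall>j\<in>{1..n}. j \<noteq> 1 \<longrightarrow> D 1 < D j"
    and "aux_value n m D c a b xi \<ge> 0"
  shows "R1_value n m D c a b xi = c_star n m D c a b xi"
proof -
  obtain x0 y where x0: "P_feasible n m a b xi x0"
    and y: "\<forall>i\<in>{1..m}. y i \<ge> 0" "(\<Sum>i\<in>{1..m}. y i * xi i) > 0"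
    using assms(2) unfolding assumption1_def by blast
  obtain xs ws where f: "R1_feasible n m a b xi xs ws"
    and opt: "\<And>x w. R1_feasible n m a b xi x w \<Longrightarrow> R1_obj n D c xs ws \<le> R1_obj n D c x w"
    using R1_min[OF x0 y, of D c] by metis
  have tight: "ws = (\<Sum>j\<in>{1..n}. (xs j)^2)"
    using slack_impossible[OF assms(1) assms(4) f opt] f unfolding R1_feasible_def by simp
  have objq: "R1_obj n D c x (\<Sum>j\<in>{1..n}. (x j)^2) = qobj n D c x" for x
  proof -
    have "D 1 * (\<Sum>j\<in>{1..n}. (x j)^2) + (\<Sum>j\<in>{1..n}. (D j - D 1) * (x j)^2) = (\<Sum>j\<in>{1..n}. D j * (x j)^2)"
      by (simp add: sum_distrib_left sum.distrib[symmetric] algebra_simps)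
    thus ?thesis unfolding R1_obj_def qobj_def by simp
  qed
  have pf: "P_feasible n m a b xi xs" using f tight unfolding R1_feasible_def P_feasible_def by simp
  show ?thesis
  proof (rule antisym)
    show "R1_value n m D c a b xi \<le> c_star n m D c a b xi"
      unfolding c_star_def
    proof (rule Inf_greatest)
      fix e assume "e \<in> (\<lambda>x. ereal (qobj n D c x)) ` {x. P_feasible n m a b xi x}"
      then obtain x where x: "P_feasible n m a b xi x" "e = ereal (qobj n D c x)" by auto
      have "R1_feasible n m a b xi x (\<Sum>j\<in>{1..n}. (x j)^2)"
        using x(1) unfolding R1_feasible_def P_feasible_def by simp
      hence "R1_value n m D c a b xi \<le> ereal (R1_obj n D c x (\<Sum>j\<in>{1..n}. (x j)^2))"
        unfolding R1_value_def by (intro Inf_lower) (auto intro!: image_eqI[where x="(x, \<Sum>j\<in>{1..n}. (x j)^2)"])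
      thus "R1_value n m D c a b xi \<le> e" using x(2) objq by simp
    qed
  next
    show "c_star n m D c a b xi \<le> R1_value n m D c a b xi"
      unfolding R1_value_def
    proof (rule Inf_greatest)
      fix e assume "e \<in> (\<lambda>(x, w1). ereal (R1_obj n D c x w1)) ` {(x, w1). R1_feasible n m a b xi x w1}"
      then obtain x w where xw: "R1_feasible n m a b xi x w" "e = ereal (R1_obj n D c x w)" by auto
      have "c_star n m D c a b xi \<le> ereal (qobj n D c xs)"
        unfolding c_star_def using pf by (intro Inf_lower) auto
      also have "\<dots> = ereal (R1_obj n D c xs ws)" using objq tight by simp
      also have "\<dots> \<le> e" using opt[OF xw(1)] xw(2) by simp
      finally show "c_star n m D c a b xi \<le> e" .
    qed
  qed
qed

end
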